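(* Let $F$ be a Banach space and $X=F\oplus F'$, so that $X''=F''\oplus F'''$. Fix $x'',y''\in F''$ and $x''',y'''\in F'''$. If $\tilde\delta_{(x'',x''')}\ast\tilde\delta_{(y'',y''')}=\tilde\delta_{(y'',y''')}\ast\tilde\delta_{(x'',x''')}$, then $\rho(x''')(y'')=\rho(y''')(x'')$, where $\rho:F'''\to F^\perp$ is the canonical projection.
   Context: $F'''=i_{F'}(F')\oplus F^\perp$, where $F^\perp\subseteq F'''$ is the annihilator of the canonical image $i_F(F)\subseteq F''$; $\rho$ is the projection onto $F^\perp$ along $i_{F'}(F')$. $\mathcal{H}_b(X)$ is the Fréchet algebra of entire functions of bounded type on $X$ and $\mathcal{M}_b(X)$ its spectrum. For $f\in\mathcal{H}_b(X)$, $\tilde f\in\mathcal{H}_b(X'')$ is its Aron–Berner extension (multilinear forms extended by iterated weak-star limits from the right variable to the left, polynomials through their symmetric multilinear forms, functions termwise in their Taylor series at $0$), and $\tilde\delta_z(f)=\tilde f(z)$ for $z\in X''$. Convolution: $\varphi\ast\psi(f)=\varphi\big(x\mapsto\psi(\tau_xf)\big)$ with $\tau_xf(y)=f(y+x)$. *)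

theory Defs
  imports "HOL-Analysis.Analysis"
begin

class cbanach = banach +
  fixes cscale :: "complex \<Rightarrow> 'a \<Rightarrow> 'a"
  assumes cscale_of_real: "cscale (complex_of_real r) x = scaleR r x"
    and cscale_add_right: "cscale a (x + y) = cscale a x + cscale a y"
    and cscale_add_left: "cscale (a + b) x = cscale a x + cscale b x"
    and cscale_cscale: "cscale a (cscale b x) = cscale (a * b) x"
    and norm_cscale: "norm (cscale a x) = cmod a * norm x"

definition clin_on :: "'v set \<Rightarrow> ('v \<Rightarrow> 'v \<Rightarrow> 'v) \<Rightarrow> (complex \<Rightarrow> 'v \<Rightarrow> 'v) \<Rightarrow> ('v \<Rightarrow> complex) \<Rightarrow> bool" where
  "clin_on S ad sm L \<longleftrightarrow>
     (\<forall>x\<in>S. \<forall>y\<in>S. L (ad x y) = L x + L y) \<and> (\<forall>c. \<forall>x\<in>S. L (sm c x) = c * L x)"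

definition bdd_on :: "'v set \<Rightarrow> ('v \<Rightarrow> real) \<Rightarrow> ('v \<Rightarrow> complex) \<Rightarrow> bool" where
  "bdd_on S N L \<longleftrightarrow> (\<exists>C. \<forall>x\<in>S. cmod (L x) \<le> C * N x)"

text \<open>Continuous complex-linear functionals, represented extensionally (zero off the carrier).\<close>
definition cdual :: "'v set \<Rightarrow> ('v \<Rightarrow> 'v \<Rightarrow> 'v) \<Rightarrow> (complex \<Rightarrow> 'v \<Rightarrow> 'v) \<Rightarrow> ('v \<Rightarrow> real) \<Rightarrow> ('v \<Rightarrow> complex) set" where
  "cdual S ad sm N = {L. clin_on S ad sm L \<and> bdd_on S N L \<and> (\<forall>x. x \<notin> S \<longrightarrow> L x = 0)}"

definition dnorm :: "'v set \<Rightarrow> ('v \<Rightarrow> real) \<Rightarrow> ('v \<Rightarrow> complex) \<Rightarrow> real" where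
  "dnorm S N L = Inf {C. 0 \<le> C \<and> (\<forall>x\<in>S. cmod (L x) \<le> C * N x)}"

definition fadd :: "('v \<Rightarrow> complex) \<Rightarrow> ('v \<Rightarrow> complex) \<Rightarrow> 'v \<Rightarrow> complex" where
  "fadd L M = (\<lambda>x. L x + M x)"

definition fsm :: "complex \<Rightarrow> ('v \<Rightarrow> complex) \<Rightarrow> 'v \<Rightarrow> complex" where
  "fsm c L = (\<lambda>x. c * L x)"

definition Fd :: "('a::cbanach \<Rightarrow> complex) set" where
  "Fd = cdual UNIV (+) cscale norm"

definition FdN :: "('a::cbanach \<Rightarrow> complex) \<Rightarrow> real" where
  "FdN = dnorm UNIV norm"

definition Fdd :: "(('a::cbanach \<Rightarrow> complex) \<Rightarrow> complex) set" where
  "Fdd = cdual Fd fadd fsm FdN"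

definition FddN :: "(('a::cbanach \<Rightarrow> complex) \<Rightarrow> complex) \<Rightarrow> real" where
  "FddN = dnorm Fd FdN"

definition Fddd :: "((('a::cbanach \<Rightarrow> complex) \<Rightarrow> complex) \<Rightarrow> complex) set" where
  "Fddd = cdual Fdd fadd fsm FddN"

definition JF :: "'a::cbanach \<Rightarrow> ('a \<Rightarrow> complex) \<Rightarrow> complex" where
  "JF x = (\<lambda>\<phi>. if \<phi> \<in> Fd then \<phi> x else 0)"

definition JFd :: "('a::cbanach \<Rightarrow> complex) \<Rightarrow> (('a \<Rightarrow> complex) \<Rightarrow> complex) \<Rightarrow> complex" where
  "JFd \<phi> = (\<lambda>u. if u \<in> Fdd then u \<phi> else 0)"

definition Fperp :: "((('a::cbanach \<Rightarrow> complex) \<Rightarrow> complex) \<Rightarrow> complex) set" where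
  "Fperp = {t \<in> Fddd. \<forall>x. t (JF x) = 0}"

definition rho :: "((('a::cbanach \<Rightarrow> complex) \<Rightarrow> complex) \<Rightarrow> complex) \<Rightarrow> ((('a \<Rightarrow> complex) \<Rightarrow> complex) \<Rightarrow> complex)" where
  "rho t = (THE p. p \<in> Fperp \<and> (\<exists>\<phi>\<in>Fd. t = fadd (JFd \<phi>) p))"

type_synonym 'a X = "'a \<times> ('a \<Rightarrow> complex)"

definition Xc :: "('a::cbanach) X set" where
  "Xc = UNIV \<times> Fd"

definition Xadd :: "('a::cbanach) X \<Rightarrow> 'a X \<Rightarrow> 'a X" where
  "Xadd u v = (fst u + fst v, fadd (snd u) (snd v))"

definition Xsm :: "complex \<Rightarrow> ('a::cbanach) X \<Rightarrow> 'a X" where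
  "Xsm c u = (cscale c (fst u), fsm c (snd u))"

definition Xzero :: "('a::cbanach) X" where
  "Xzero = (0, (\<lambda>_. 0))"

definition XN :: "('a::cbanach) X \<Rightarrow> real" where
  "XN u = max (norm (fst u)) (FdN (snd u))"

definition Xd :: "(('a::cbanach) X \<Rightarrow> complex) set" where
  "Xd = cdual Xc Xadd Xsm XN"

definition XdN :: "(('a::cbanach) X \<Rightarrow> complex) \<Rightarrow> real" where
  "XdN = dnorm Xc XN"

definition Xdd :: "((('a::cbanach) X \<Rightarrow> complex) \<Rightarrow> complex) set" where
  "Xdd = cdual Xd fadd fsm XdN"

text \<open>The canonical identification F'' \<oplus> F''' \<cong> X'': (x'',x''')(L) = x''(L \<circ> inl) + x'''(L \<circ> inr).\<close>
definition embX :: "(('a::cbanach \<Rightarrow> complex) \<Rightarrow> complex) \<Rightarrow> ((('a \<Rightarrow> complex) \<Rightarrow> complex) \<Rightarrow> complex)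
                      \<Rightarrow> ('a X \<Rightarrow> complex) \<Rightarrow> complex" where
  "embX x2 x3 = (\<lambda>L. if L \<in> Xd
      then x2 (\<lambda>a. L (a, (\<lambda>_. 0))) + x3 (\<lambda>\<phi>. if \<phi> \<in> Fd then L (0, \<phi>) else 0)
      else 0)"

definition Hb :: "(('a::cbanach) X \<Rightarrow> complex) set" where
  "Hb = {f. (\<forall>x\<in>Xc. \<exists>D\<in>Xd. \<forall>e>0. \<exists>d>0. \<forall>h\<in>Xc. XN h < d \<longrightarrow>
                 cmod (f (Xadd x h) - f x - D h) \<le> e * XN h)
          \<and> (\<forall>r. \<exists>M. \<forall>x\<in>Xc. XN x \<le> r \<longrightarrow> cmod (f x) \<le> M)}"

text \<open>n-th Taylor polynomial at 0: P_n(x) = d^n f(0)(x,\<dots>,x)/n!.\<close>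
definition taylorP :: "(('a::cbanach) X \<Rightarrow> complex) \<Rightarrow> nat \<Rightarrow> 'a X \<Rightarrow> complex" where
  "taylorP f n x = (deriv ^^ n) (\<lambda>t. f (Xsm t x)) 0 / fact n"

definition xsum :: "('a::cbanach) X list \<Rightarrow> 'a X" where
  "xsum xs = foldr Xadd xs Xzero"

text \<open>Symmetric n-linear form of P_n (polarization formula).\<close>
definition symA :: "(('a::cbanach) X \<Rightarrow> complex) \<Rightarrow> nat \<Rightarrow> 'a X list \<Rightarrow> complex" where
  "symA f n xs = (\<Sum>es\<in>{es :: complex list. length es = n \<and> set es \<subseteq> {-1, 1}}.
        prod_list es * taylorP f n (xsum (map2 Xsm es xs))) / (2 ^ n * fact n)"

text \<open>Aron--Berner extension of a multilinear form: the rightmost variable is extended first.\<close>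
fun abext :: "'v set \<Rightarrow> ('v list \<Rightarrow> complex) \<Rightarrow> (('v \<Rightarrow> complex) \<Rightarrow> complex) list \<Rightarrow> complex" where
  "abext S A [] = A []"
| "abext S A (z # zs) = z (\<lambda>x. if x \<in> S then abext S (\<lambda>ys. A (x # ys)) zs else 0)"

definition abf :: "(('a::cbanach) X \<Rightarrow> complex) \<Rightarrow> (('a X \<Rightarrow> complex) \<Rightarrow> complex) \<Rightarrow> complex" where
  "abf f z = (\<Sum>n. abext Xc (symA f n) (replicate n z))"

definition dtilde :: "((('a::cbanach) X \<Rightarrow> complex) \<Rightarrow> complex) \<Rightarrow> ('a X \<Rightarrow> complex) \<Rightarrow> complex" where
  "dtilde z f = abf f z"

definition tau :: "('a::cbanach) X \<Rightarrow> ('a X \<Rightarrow> complex) \<Rightarrow> 'a X \<Rightarrow> complex" where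
  "tau x f = (\<lambda>y. f (Xadd y x))"

definition conv :: "((('a::cbanach) X \<Rightarrow> complex) \<Rightarrow> complex) \<Rightarrow> (('a X \<Rightarrow> complex) \<Rightarrow> complex)
                    \<Rightarrow> ('a X \<Rightarrow> complex) \<Rightarrow> complex" where
  "conv \<phi> \<psi> f = \<phi> (\<lambda>x. \<psi> (tau x f))"

end

theory Submission
  imports Defs
begin

lemma cdual_bound:
  assumes "L \<in> cdual S ad sm N" "\<forall>x\<in>S. 0 \<le> N x"
  shows "\<exists>C\<ge>0. \<forall>x\<in>S. cmod (L x) \<le> C * N x"
proof -
  from assms obtain C where C: "\<forall>x\<in>S. cmod (L x) \<le> C * N x"
    unfolding cdual_def bdd_on_def by auto
  have "\<forall>x\<in>S. cmod (L x) \<le> max C 0 * N x"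
  proof
    fix x assume x: "x \<in> S"
    have "C * N x \<le> max C 0 * N x" using assms(2) x by (intro mult_right_mono) auto
    moreover have "cmod (L x) \<le> C * N x" using C x by auto
    ultimately show "cmod (L x) \<le> max C 0 * N x" by linarith
  qed
  then show ?thesis by (intro exI[of _ "max C 0"]) auto
qed

lemma dnorm_nonneg:
  assumes "L \<in> cdual S ad sm N" "\<forall>x\<in>S. 0 \<le> N x"
  shows "0 \<le> dnorm S N L"
proof -
  obtain C where "C \<ge> 0" "\<forall>x\<in>S. cmod (L x) \<le> C * N x" using cdual_bound[OF assms] by auto
  then show ?thesis unfolding dnorm_def by (intro cInf_greatest) auto
qed

lemma dnorm_bound:
  assumes "L \<in> cdual S ad sm N" "\<forall>x\<in>S. 0 \<le> N x" "x \<in> S"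
  shows "cmod (L x) \<le> dnorm S N L * N x"
proof -
  obtain C0 where C0: "C0 \<ge> 0" "\<forall>x\<in>S. cmod (L x) \<le> C0 * N x" using cdual_bound[OF assms(1,2)] by auto
  show ?thesis
  proof (cases "N x = 0")
    case True
    then show ?thesis using C0 assms(3) by auto
  next
    case False
    then have pos: "N x > 0" using assms by force
    have "cmod (L x) / N x \<le> dnorm S N L" unfolding dnorm_def
    proof (rule cInf_greatest)
      show "{C. 0 \<le> C \<and> (\<forall>x\<in>S. cmod (L x) \<le> C * N x)} \<noteq> {}" using C0 by auto
    next
      fix C assume "C \<in> {C. 0 \<le> C \<and> (\<forall>x\<in>S. cmod (L x) \<le> C * N x)}"
      then show "cmod (L x) / N x \<le> C" using pos assms(3) by (auto simp: pos_divide_le_eq)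
    qed
    then show ?thesis using pos by (simp add: pos_divide_le_eq)
  qed
qed

lemma dnorm_le:
  assumes "0 \<le> C" "\<forall>x\<in>S. cmod (L x) \<le> C * N x"
  shows "dnorm S N L \<le> C"
  unfolding dnorm_def
  by (rule cInf_lower) (use assms in \<open>auto intro!: bdd_belowI[of _ 0]\<close>)

lemma fadd_app[simp]: "fadd L M x = L x + M x" by (simp add: fadd_def)
lemma fsm_app[simp]: "fsm c L x = c * L x" by (simp add: fsm_def)

lemma cdual_fadd:
  assumes "L \<in> cdual S ad sm N" "M \<in> cdual S ad sm N"
  shows "fadd L M \<in> cdual S ad sm N"
proof -
  obtain C1 where C1: "\<forall>x\<in>S. cmod (L x) \<le> C1 * N x" using assms unfolding cdual_def bdd_on_def by auto
  obtain C2 where C2: "\<forall>x\<in>S. cmod (M x) \<le> C2 * N x" using assms unfolding cdual_def bdd_on_def by auto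
  have B: "\<forall>x\<in>S. cmod (L x + M x) \<le> (C1 + C2) * N x"
  proof
    fix x assume "x \<in> S"
    then have "cmod (L x) + cmod (M x) \<le> (C1 + C2) * N x" using C1 C2 by (auto simp: algebra_simps intro: add_mono)
    then show "cmod (L x + M x) \<le> (C1 + C2) * N x" using norm_triangle_ineq[of "L x" "M x"] by linarith
  qed
  have "bdd_on S N (fadd L M)" unfolding bdd_on_def using B by auto
  then show ?thesis using assms unfolding cdual_def clin_on_def
    by (auto simp: algebra_simps)
qed

lemma cdual_fsm:
  assumes "L \<in> cdual S ad sm N"
  shows "fsm c L \<in> cdual S ad sm N"
proof -
  obtain C1 where C1: "\<forall>x\<in>S. cmod (L x) \<le> C1 * N x" using assms unfolding cdual_def bdd_on_def by auto
  have "\<forall>x\<in>S. cmod (c * L x) \<le> (cmod c * C1) * N x"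
  proof
    fix x assume "x \<in> S"
    then have "cmod c * cmod (L x) \<le> cmod c * (C1 * N x)" using C1 by (intro mult_left_mono) auto
    then show "cmod (c * L x) \<le> (cmod c * C1) * N x" by (simp add: norm_mult mult.assoc)
  qed
  then have "bdd_on S N (fsm c L)" unfolding bdd_on_def by auto
  then show ?thesis using assms unfolding cdual_def bdd_on_def clin_on_def
    by (auto simp: algebra_simps)
qed

lemma cdual_zero: "(\<lambda>_. 0) \<in> cdual S ad sm N"
  unfolding cdual_def bdd_on_def clin_on_def by (auto intro: exI[of _ 0])

lemma cscale_zero[simp]: "cscale 0 x = 0"
  using cscale_of_real[of 0 x] by simp

lemma Fd_add[simp]: "\<phi> \<in> Fd \<Longrightarrow> \<phi> (x + y) = \<phi> x + \<phi> y"
  unfolding Fd_def cdual_def clin_on_def by auto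
lemma Fd_scale[simp]: "\<phi> \<in> Fd \<Longrightarrow> \<phi> (cscale c x) = c * \<phi> x"
  unfolding Fd_def cdual_def clin_on_def by auto
lemma Fd_zero_app[simp]: "\<phi> \<in> Fd \<Longrightarrow> \<phi> 0 = 0"
  using Fd_scale[of \<phi> 0 0] by simp
lemma Fd_fadd[simp]: "\<phi> \<in> Fd \<Longrightarrow> \<psi> \<in> Fd \<Longrightarrow> fadd \<phi> \<psi> \<in> Fd"
  unfolding Fd_def by (rule cdual_fadd)
lemma Fd_fsm[simp]: "\<phi> \<in> Fd \<Longrightarrow> fsm c \<phi> \<in> Fd"
  unfolding Fd_def by (rule cdual_fsm)
lemma Fd_zero[simp]: "(\<lambda>_. 0) \<in> Fd"
  unfolding Fd_def by (rule cdual_zero)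

lemma FdN_nonneg: "\<phi> \<in> Fd \<Longrightarrow> 0 \<le> FdN \<phi>"
  unfolding FdN_def Fd_def by (rule dnorm_nonneg) auto
lemma Fd_bound: "\<phi> \<in> Fd \<Longrightarrow> cmod (\<phi> a) \<le> FdN \<phi> * norm a"
  unfolding FdN_def Fd_def by (rule dnorm_bound) auto

lemma Fdd_add[simp]: "u \<in> Fdd \<Longrightarrow> \<phi> \<in> Fd \<Longrightarrow> \<psi> \<in> Fd \<Longrightarrow> u (fadd \<phi> \<psi>) = u \<phi> + u \<psi>"
  unfolding Fdd_def cdual_def clin_on_def by auto
lemma Fdd_scale[simp]: "u \<in> Fdd \<Longrightarrow> \<phi> \<in> Fd \<Longrightarrow> u (fsm c \<phi>) = c * u \<phi>"
  unfolding Fdd_def cdual_def clin_on_def by auto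
lemma Fdd_out: "u \<in> Fdd \<Longrightarrow> \<phi> \<notin> Fd \<Longrightarrow> u \<phi> = 0"
  unfolding Fdd_def cdual_def by auto
lemma Fdd_zero_app[simp]: "u \<in> Fdd \<Longrightarrow> u (\<lambda>_. 0) = 0"
proof -
  assume u: "u \<in> Fdd"
  have "fsm 0 (\<lambda>_. 0) = (\<lambda>_::'a. 0)" by (simp add: fsm_def)
  then show ?thesis using Fdd_scale[OF u Fd_zero, of 0] by simp
qed
lemma Fdd_fadd[simp]: "u \<in> Fdd \<Longrightarrow> v \<in> Fdd \<Longrightarrow> fadd u v \<in> Fdd"
  unfolding Fdd_def by (rule cdual_fadd)
lemma Fdd_fsm[simp]: "u \<in> Fdd \<Longrightarrow> fsm c u \<in> Fdd"
  unfolding Fdd_def by (rule cdual_fsm)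
lemma Fdd_zero[simp]: "(\<lambda>_. 0) \<in> Fdd"
  unfolding Fdd_def by (rule cdual_zero)
lemma FddN_nonneg: "u \<in> Fdd \<Longrightarrow> 0 \<le> FddN u"
  unfolding FddN_def Fdd_def by (rule dnorm_nonneg) (auto simp: FdN_nonneg)
lemma Fdd_bound: "u \<in> Fdd \<Longrightarrow> \<exists>C\<ge>0. \<forall>\<phi>\<in>Fd. cmod (u \<phi>) \<le> C * FdN \<phi>"
  unfolding Fdd_def by (rule cdual_bound) (auto simp: FdN_nonneg)
lemma Fdd_bound2: "u \<in> Fdd \<Longrightarrow> \<phi> \<in> Fd \<Longrightarrow> cmod (u \<phi>) \<le> FddN u * FdN \<phi>"
  unfolding FddN_def Fdd_def by (rule dnorm_bound) (auto simp: FdN_nonneg)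

lemma Fddd_add[simp]: "t \<in> Fddd \<Longrightarrow> u \<in> Fdd \<Longrightarrow> v \<in> Fdd \<Longrightarrow> t (fadd u v) = t u + t v"
  unfolding Fddd_def cdual_def clin_on_def by auto
lemma Fddd_scale[simp]: "t \<in> Fddd \<Longrightarrow> u \<in> Fdd \<Longrightarrow> t (fsm c u) = c * t u"
  unfolding Fddd_def cdual_def clin_on_def by auto
lemma Fddd_out: "t \<in> Fddd \<Longrightarrow> u \<notin> Fdd \<Longrightarrow> t u = 0"
  unfolding Fddd_def cdual_def by auto
lemma Fddd_zero_app[simp]: "t \<in> Fddd \<Longrightarrow> t (\<lambda>_. 0) = 0"
proof -
  assume t: "t \<in> Fddd"
  have "fsm 0 (\<lambda>_. 0) = (\<lambda>_::'a\<Rightarrow>complex. 0)" by (simp add: fsm_def)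
  then show ?thesis using Fddd_scale[OF t Fdd_zero, of 0] by simp
qed
lemma Fddd_fadd[simp]: "u \<in> Fddd \<Longrightarrow> v \<in> Fddd \<Longrightarrow> fadd u v \<in> Fddd"
  unfolding Fddd_def by (rule cdual_fadd)
lemma Fddd_fsm[simp]: "u \<in> Fddd \<Longrightarrow> fsm c u \<in> Fddd"
  unfolding Fddd_def by (rule cdual_fsm)
lemma Fddd_bound: "t \<in> Fddd \<Longrightarrow> \<exists>C\<ge>0. \<forall>u\<in>Fdd. cmod (t u) \<le> C * FddN u"
  unfolding Fddd_def by (rule cdual_bound) (auto simp: FddN_nonneg)

lemma JF_app[simp]: "\<phi> \<in> Fd \<Longrightarrow> JF a \<phi> = \<phi> a"
  by (simp add: JF_def)

lemma JF_Fdd[simp]: "JF a \<in> Fdd"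
proof -
  have "clin_on Fd fadd fsm (JF a)" unfolding clin_on_def by simp
  moreover have "bdd_on Fd FdN (JF a)" unfolding bdd_on_def
    using Fd_bound by (auto simp: mult.commute intro!: exI[of _ "norm a"])
  ultimately show ?thesis unfolding Fdd_def cdual_def by (auto simp: JF_def)
qed

lemma FddN_JF: "FddN (JF a) \<le> norm a"
  unfolding FddN_def by (rule dnorm_le) (use Fd_bound in \<open>auto simp: mult.commute\<close>)

lemma JF_add: "JF (a + b) = fadd (JF a) (JF b)"
  by (rule ext) (simp add: JF_def)
lemma JF_scale: "JF (cscale c a) = fsm c (JF a)"
  by (rule ext) (simp add: JF_def)
lemma JF_0: "JF 0 = (\<lambda>_. 0)"
  by (rule ext) (simp add: JF_def)

lemma compJF_Fd:
  assumes t: "t \<in> Fddd" shows "(\<lambda>a. t (JF a)) \<in> Fd"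
proof -
  obtain C where C: "C \<ge> 0" "\<forall>u\<in>Fdd. cmod (t u) \<le> C * FddN u" using Fddd_bound[OF t] by auto
  have "clin_on UNIV (+) cscale (\<lambda>a. t (JF a))" unfolding clin_on_def
    using t by (simp add: JF_add JF_scale)
  moreover have "bdd_on UNIV norm (\<lambda>a. t (JF a))" unfolding bdd_on_def
  proof (intro exI[of _ C] ballI)
    fix a :: 'a
    have "cmod (t (JF a)) \<le> C * FddN (JF a)" using C by simp
    also have "\<dots> \<le> C * norm a" using C(1) FddN_JF by (rule mult_left_mono[rotated])
    finally show "cmod (t (JF a)) \<le> C * norm a" .
  qed
  ultimately show ?thesis unfolding Fd_def cdual_def by auto
qed

lemma JFd_app[simp]: "u \<in> Fdd \<Longrightarrow> JFd \<phi> u = u \<phi>"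
  by (simp add: JFd_def)

lemma JFd_Fddd:
  assumes p: "\<phi> \<in> Fd" shows "JFd \<phi> \<in> Fddd"
proof -
  have "clin_on Fdd fadd fsm (JFd \<phi>)" unfolding clin_on_def using p by simp
  moreover have "bdd_on Fdd FddN (JFd \<phi>)" unfolding bdd_on_def
    using Fdd_bound2 p by (auto simp: mult.commute intro!: exI[of _ "FdN \<phi>"])
  ultimately show ?thesis unfolding Fddd_def cdual_def by (auto simp: JFd_def)
qed

lemma rho_eq:
  assumes t: "t \<in> Fddd"
  shows "rho t = (\<lambda>u. t u - JFd (\<lambda>a. t (JF a)) u)"
  unfolding rho_def
proof (rule the_equality)
  define \<phi>0 where "\<phi>0 = (\<lambda>a. t (JF a))"
  have p0: "\<phi>0 \<in> Fd" unfolding \<phi>0_def using compJF_Fd[OF t] .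
  have eq: "(\<lambda>u. t u - JFd \<phi>0 u) = fadd t (fsm (-1) (JFd \<phi>0))"
    by (rule ext) simp
  show "(\<lambda>u. t u - JFd (\<lambda>a. t (JF a)) u) \<in> Fperp \<and>
    (\<exists>\<phi>\<in>Fd. t = fadd (JFd \<phi>) (\<lambda>u. t u - JFd (\<lambda>a. t (JF a)) u))"
    unfolding \<phi>0_def[symmetric]
  proof
    show "(\<lambda>u. t u - JFd \<phi>0 u) \<in> Fperp"
      unfolding Fperp_def eq using t JFd_Fddd[OF p0] p0 by (simp add: \<phi>0_def)
    show "\<exists>\<phi>\<in>Fd. t = fadd (JFd \<phi>) (\<lambda>u. t u - JFd \<phi>0 u)"
      using p0 by (intro bexI[of _ \<phi>0]) (auto simp: fun_eq_iff)
  qed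
next
  fix p assume "p \<in> Fperp \<and> (\<exists>\<phi>\<in>Fd. t = fadd (JFd \<phi>) p)"
  then obtain \<phi> where p: "p \<in> Fperp" and ph: "\<phi> \<in> Fd" and teq: "t = fadd (JFd \<phi>) p" by auto
  have "\<And>a. t (JF a) = \<phi> a" using p ph by (simp add: teq Fperp_def)
  then have "(\<lambda>a. t (JF a)) = \<phi>" by auto
  then show "p = (\<lambda>u. t u - JFd (\<lambda>a. t (JF a)) u)" by (simp add: teq fun_eq_iff)
qed

lemma Xc_iff: "u \<in> Xc \<longleftrightarrow> snd u \<in> Fd"
  by (cases u) (auto simp: Xc_def)
lemma Xadd_Xc[simp]: "u \<in> Xc \<Longrightarrow> v \<in> Xc \<Longrightarrow> Xadd u v \<in> Xc"
  by (simp add: Xc_iff Xadd_def)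
lemma Xsm_Xc[simp]: "u \<in> Xc \<Longrightarrow> Xsm c u \<in> Xc"
  by (simp add: Xc_iff Xsm_def)
lemma Xzero_Xc[simp]: "Xzero \<in> Xc"
  by (simp add: Xc_iff Xzero_def)
lemma XN_ge1: "norm (fst u) \<le> XN u" by (simp add: XN_def)
lemma XN_ge2: "FdN (snd u) \<le> XN u" by (simp add: XN_def)
lemma XN_nonneg: "0 \<le> XN u" by (simp add: XN_def le_max_iff_disj)

lemma Xd_lin:
  assumes a: "\<alpha> \<in> Fd" and b: "\<beta> \<in> Fdd"
  shows "(\<lambda>u. if u \<in> Xc then \<alpha> (fst u) + \<beta> (snd u) else 0) \<in> Xd"
proof -
  obtain C where C: "C \<ge> 0" "\<forall>\<phi>\<in>Fd. cmod (\<beta> \<phi>) \<le> C * FdN \<phi>" using Fdd_bound[OF b] by auto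
  have "clin_on Xc Xadd Xsm (\<lambda>u. if u \<in> Xc then \<alpha> (fst u) + \<beta> (snd u) else 0)"
    unfolding clin_on_def using a b by (auto simp: Xadd_def Xsm_def Xc_iff algebra_simps)
  moreover have "bdd_on Xc XN (\<lambda>u. if u \<in> Xc then \<alpha> (fst u) + \<beta> (snd u) else 0)"
    unfolding bdd_on_def
  proof (intro exI[of _ "FdN \<alpha> + C"] ballI)
    fix u :: "'a X" assume u: "u \<in> Xc"
    have "cmod (\<alpha> (fst u)) \<le> FdN \<alpha> * norm (fst u)" using Fd_bound[OF a] .
    also have "\<dots> \<le> FdN \<alpha> * XN u" using FdN_nonneg[OF a] XN_ge1 by (rule mult_left_mono[rotated])
    finally have 1: "cmod (\<alpha> (fst u)) \<le> FdN \<alpha> * XN u" .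
    have "cmod (\<beta> (snd u)) \<le> C * FdN (snd u)" using C u by (simp add: Xc_iff)
    also have "\<dots> \<le> C * XN u" using C(1) XN_ge2 by (rule mult_left_mono[rotated])
    finally have 2: "cmod (\<beta> (snd u)) \<le> C * XN u" .
    have "cmod (\<alpha> (fst u) + \<beta> (snd u)) \<le> cmod (\<alpha> (fst u)) + cmod (\<beta> (snd u))"
      by (rule norm_triangle_ineq)
    then show "cmod (if u \<in> Xc then \<alpha> (fst u) + \<beta> (snd u) else 0) \<le> (FdN \<alpha> + C) * XN u"
      using 1 2 u by (simp add: algebra_simps)
  qed
  ultimately show ?thesis unfolding Xd_def cdual_def by auto
qed

lemma embX_lin:
  assumes "x2 \<in> Fdd" "x3 \<in> Fddd" "\<alpha> \<in> Fd" "\<beta> \<in> Fdd"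
  shows "embX x2 x3 (\<lambda>u. if u \<in> Xc then \<alpha> (fst u) + \<beta> (snd u) else 0) = x2 \<alpha> + x3 \<beta>"
proof -
  have 1: "(\<lambda>a. (\<lambda>u. if u \<in> Xc then \<alpha> (fst u) + \<beta> (snd u) else 0) (a, (\<lambda>_. 0))) = \<alpha>"
    using assms by (auto simp: Xc_iff)
  have 2: "(\<lambda>\<phi>. if \<phi> \<in> Fd then (\<lambda>u. if u \<in> Xc then \<alpha> (fst u) + \<beta> (snd u) else 0) (0, \<phi>) else 0) = \<beta>"
    using assms by (auto simp: Xc_iff fun_eq_iff Fdd_out)
  show ?thesis unfolding embX_def 1 2 using Xd_lin[OF assms(3,4)] by simp
qed

lemma embX_zero:
  assumes "x2 \<in> Fdd" "x3 \<in> Fddd"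
  shows "embX x2 x3 (\<lambda>_. 0) = 0"
  using assms by (simp add: embX_def)

lemma deriv_zero_fun: "deriv (\<lambda>t::complex. 0::complex) = (\<lambda>t. 0)"
  by (rule ext) (rule DERIV_imp_deriv, rule derivative_eq_intros, rule refl)
lemma deriv_const_fun: "deriv (\<lambda>t::complex. c::complex) = (\<lambda>t. 0)"
  by (rule ext) (rule DERIV_imp_deriv, rule derivative_eq_intros, rule refl)
lemma deriv_lin_fun: "deriv (\<lambda>t::complex. l + 2 * q * t) = (\<lambda>t. 2 * q)"
  by (rule ext) (rule DERIV_imp_deriv, (rule derivative_eq_intros | simp)+)
lemma deriv_quad_fun: "deriv (\<lambda>t::complex. c + l * t + q * t ^ 2) = (\<lambda>t. l + 2 * q * t)"
  by (rule ext) (rule DERIV_imp_deriv, (rule derivative_eq_intros | simp)+)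
lemma funpow_deriv_zero: "(deriv ^^ n) (\<lambda>t::complex. 0::complex) = (\<lambda>t. 0)"
  by (induction n) (simp_all add: deriv_zero_fun)

lemma funpow_deriv_quad:
  "(deriv ^^ n) (\<lambda>t::complex. c + l * t + q * t ^ 2) 0 =
     (case n of 0 \<Rightarrow> c | Suc 0 \<Rightarrow> l | Suc (Suc 0) \<Rightarrow> 2 * q | _ \<Rightarrow> 0)"
proof (cases n)
  case 0 then show ?thesis by simp
next
  case (Suc n1)
  show ?thesis
  proof (cases n1)
    case 0 then show ?thesis using Suc by (simp add: deriv_quad_fun)
  next
    case (Suc n2)
    show ?thesis
    proof (cases n2)
      case 0 then show ?thesis using Suc \<open>n = Suc n1\<close> by (simp add: deriv_quad_fun deriv_lin_fun)
    next
      case (Suc m)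
      then have "n = m + 3" using \<open>n = Suc n1\<close> \<open>n1 = Suc n2\<close> by simp
      then have "(deriv ^^ n) (\<lambda>t::complex. c + l * t + q * t ^ 2) = (deriv ^^ m) (deriv (deriv (deriv (\<lambda>t::complex. c + l * t + q * t ^ 2))))"
        by (simp add: funpow_add numeral_3_eq_3 funpow_Suc_right del: funpow.simps)
      also have "\<dots> = (\<lambda>t. 0)" by (simp add: deriv_quad_fun deriv_lin_fun deriv_const_fun funpow_deriv_zero)
      finally show ?thesis using \<open>n = m + 3\<close> by (simp split: nat.split)
    qed
  qed
qed

lemma taylorP_quad:
  assumes "\<And>t. g (Xsm t u) = c + l * t + q * t ^ 2"
  shows "taylorP g n u = (case n of 0 \<Rightarrow> c | Suc 0 \<Rightarrow> l | Suc (Suc 0) \<Rightarrow> q | _ \<Rightarrow> 0)"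
proof -
  have "(\<lambda>t. g (Xsm t u)) = (\<lambda>t. c + l * t + q * t ^ 2)" using assms by auto
  then have "taylorP g n u = (deriv ^^ n) (\<lambda>t::complex. c + l * t + q * t ^ 2) 0 / fact n"
    unfolding taylorP_def by simp
  also have "\<dots> = (case n of 0 \<Rightarrow> c | Suc 0 \<Rightarrow> l | Suc (Suc 0) \<Rightarrow> 2 * q | _ \<Rightarrow> 0) / fact n"
    by (rule arg_cong[where f="\<lambda>x. x / fact n"], rule funpow_deriv_quad)
  finally show ?thesis by (simp split: nat.split)
qed

lemma xsum_Xc: "set xs \<subseteq> Xc \<Longrightarrow> xsum (map2 Xsm es xs) \<in> Xc"
proof (induction xs arbitrary: es)
  case Nil then show ?case by (simp add: xsum_def)
next
  case (Cons x xs)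
  then show ?case by (cases es) (auto simp: xsum_def)
qed

lemma abext_zero:
  assumes "\<And>xs. set xs \<subseteq> S \<Longrightarrow> length xs = length zs \<Longrightarrow> A xs = 0"
    and "\<forall>z\<in>set zs. z (\<lambda>_. 0) = 0"
  shows "abext S A zs = 0"
  using assms
proof (induction zs arbitrary: A)
  case Nil then show ?case by simp
next
  case (Cons z zs)
  have "\<And>x. x \<in> S \<Longrightarrow> abext S (\<lambda>ys. A (x # ys)) zs = 0"
    using Cons.IH Cons.prems by auto
  then have "(\<lambda>x. if x \<in> S then abext S (\<lambda>ys. A (x # ys)) zs else 0) = (\<lambda>_. 0)" by auto
  then show ?case using Cons.prems by simp
qed

lemma signs0: "{es :: complex list. length es = 0 \<and> set es \<subseteq> {-1, 1}} = {[]}" by auto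
lemma signs1: "{es :: complex list. length es = 1 \<and> set es \<subseteq> {-1, 1}} = {[-1], [1]}"
  by (auto simp: length_Suc_conv)
lemma signs2: "{es :: complex list. length es = 2 \<and> set es \<subseteq> {-1, 1}} = {[-1,-1], [-1,1], [1,-1], [1,1]}"
  by (auto simp: length_Suc_conv numeral_2_eq_2)

lemma abf_quad:
  assumes z0: "z (\<lambda>_. 0) = 0"
  and g: "\<And>u t. u \<in> Xc \<Longrightarrow> g (Xsm t u) = c + l u * t + q u * t ^ 2"
  and l: "\<And>x e. x \<in> Xc \<Longrightarrow> l (Xadd (Xsm e x) Xzero) = e * l x"
  and q: "\<And>x y e1 e2. x \<in> Xc \<Longrightarrow> y \<in> Xc \<Longrightarrow>
     q (Xadd (Xsm e1 x) (Xadd (Xsm e2 y) Xzero)) = e1 ^ 2 * q x + e2 ^ 2 * q y + 2 * e1 * e2 * B x y"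
  shows "abf g z = c + z (\<lambda>x. if x \<in> Xc then l x else 0)
     + z (\<lambda>x. if x \<in> Xc then z (\<lambda>y. if y \<in> Xc then B x y else 0) else 0)"
proof -
  have tp: "\<And>n u. u \<in> Xc \<Longrightarrow> taylorP g n u = (case n of 0 \<Rightarrow> c | Suc 0 \<Rightarrow> l u | Suc (Suc 0) \<Rightarrow> q u | _ \<Rightarrow> 0)"
    by (rule taylorP_quad) (rule g)
  define T where "T n = abext Xc (symA g n) (replicate n z)" for n
  have T3: "T n = 0" if "n \<notin> {0,1,2}" for n
    unfolding T_def
  proof (rule abext_zero)
    fix xs :: "'a X list" assume xs: "set xs \<subseteq> Xc" "length xs = length (replicate n z)"
    have "taylorP g n (xsum (map2 Xsm es xs)) = 0" for es
      using tp[OF xsum_Xc[OF xs(1)], of n es] that by (auto split: nat.split)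
    then show "symA g n xs = 0" by (simp add: symA_def)
  qed (use z0 in auto)
  have "abf g z = sum T {0,1,2}" unfolding abf_def T_def[symmetric]
    by (rule suminf_finite) (use T3 in auto)
  also have "\<dots> = T 0 + T 1 + T 2" by simp
  also have "T 0 = c"
    using tp[OF Xzero_Xc, of 0] unfolding T_def symA_def signs0 by (simp add: xsum_def)
  also have "T 1 = z (\<lambda>x. if x \<in> Xc then l x else 0)"
  proof -
    have "symA g 1 [x] = l x" if x: "x \<in> Xc" for x
    proof -
      have "\<And>e. taylorP g 1 (xsum (map2 Xsm [e] [x])) = e * l x"
        using tp[of "Xadd (Xsm _ x) Xzero" 1] x l by (simp add: xsum_def)
      then show ?thesis unfolding symA_def signs1 by simp
    qed
    then show ?thesis by (simp add: T_def cong: if_cong)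
  qed
  also have "T 2 = z (\<lambda>x. if x \<in> Xc then z (\<lambda>y. if y \<in> Xc then B x y else 0) else 0)"
  proof -
    have "symA g 2 [x, y] = B x y" if x: "x \<in> Xc" and y: "y \<in> Xc" for x y
    proof -
      have "\<And>e1 e2. taylorP g 2 (xsum (map2 Xsm [e1, e2] [x, y])) = e1 ^ 2 * q x + e2 ^ 2 * q y + 2 * e1 * e2 * B x y"
        using tp[of "Xadd (Xsm _ x) (Xadd (Xsm _ y) Xzero)" 2] x y q by (simp add: xsum_def numeral_2_eq_2)
      then show ?thesis unfolding symA_def signs2 by (simp add: algebra_simps)
    qed
    then show ?thesis by (simp add: T_def numeral_2_eq_2 cong: if_cong)
  qed
  finally show ?thesis .
qed

lemma Xops_simps[simp]:
  "fst (Xsm c u) = cscale c (fst u)" "snd (Xsm c u) = fsm c (snd u)"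
  "fst (Xadd u v) = fst u + fst v" "snd (Xadd u v) = fadd (snd u) (snd v)"
  "fst Xzero = 0" "snd Xzero = (\<lambda>_. 0)"
  by (simp_all add: Xsm_def Xadd_def Xzero_def)

definition BB :: "'a::cbanach X \<Rightarrow> 'a X \<Rightarrow> complex" where
  "BB x y = (snd x (fst y) + snd y (fst x)) / 2"

definition QQ :: "(('a::cbanach X \<Rightarrow> complex) \<Rightarrow> complex) \<Rightarrow> complex" where
  "QQ z = z (\<lambda>x. if x \<in> Xc then z (\<lambda>y. if y \<in> Xc then BB x y else 0) else 0)"

lemma q_expand:
  assumes "x \<in> Xc" "y \<in> Xc"
  shows "snd (Xadd (Xsm e1 x) (Xadd (Xsm e2 y) Xzero)) (fst (Xadd (Xsm e1 x) (Xadd (Xsm e2 y) Xzero)))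
    = e1 ^ 2 * snd x (fst x) + e2 ^ 2 * snd y (fst y) + 2 * e1 * e2 * BB x y"
  using assms by (simp add: Xc_iff BB_def algebra_simps power2_eq_square)

lemma inner:
  assumes y2: "y2 \<in> Fdd" and y3: "y3 \<in> Fddd" and x: "x \<in> Xc"
  shows "abf (tau x (\<lambda>u. snd u (fst u))) (embX y2 y3)
     = snd x (fst x) + (y2 (snd x) + y3 (JF (fst x))) + QQ (embX y2 y3)"
proof -
  have xs: "snd x \<in> Fd" using x by (simp add: Xc_iff)
  have "abf (tau x (\<lambda>u. snd u (fst u))) (embX y2 y3) = snd x (fst x)
     + embX y2 y3 (\<lambda>y. if y \<in> Xc then snd y (fst x) + snd x (fst y) else 0) + QQ (embX y2 y3)"
    unfolding QQ_def
  proof (rule abf_quad)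
    show "embX y2 y3 (\<lambda>_. 0) = 0" using y2 y3 by (rule embX_zero)
  next
    fix u :: "'a X" and t assume "u \<in> Xc"
    then show "tau x (\<lambda>u. snd u (fst u)) (Xsm t u)
      = snd x (fst x) + (snd u (fst x) + snd x (fst u)) * t + snd u (fst u) * t ^ 2"
      using xs by (simp add: tau_def Xc_iff algebra_simps power2_eq_square)
  next
    fix y :: "'a X" and e assume "y \<in> Xc"
    then show "snd (Xadd (Xsm e y) Xzero) (fst x) + snd x (fst (Xadd (Xsm e y) Xzero)) =
       e * (snd y (fst x) + snd x (fst y))"
      using xs by (simp add: Xc_iff algebra_simps)
  qed (rule q_expand)
  also have "(\<lambda>y. if y \<in> Xc then snd y (fst x) + snd x (fst y) else 0)
      = (\<lambda>u. if u \<in> Xc then snd x (fst u) + JF (fst x) (snd u) else 0)"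
    by (auto simp: Xc_iff fun_eq_iff)
  also have "embX y2 y3 \<dots> = y2 (snd x) + y3 (JF (fst x))"
    using y2 y3 xs by (intro embX_lin) auto
  finally show ?thesis .
qed

lemma conv_formula:
  assumes x2: "x2 \<in> Fdd" and x3: "x3 \<in> Fddd" and y2: "y2 \<in> Fdd" and y3: "y3 \<in> Fddd"
  shows "conv (dtilde (embX x2 x3)) (dtilde (embX y2 y3)) (\<lambda>u. snd u (fst u))
     = QQ (embX y2 y3) + (x2 (\<lambda>a. y3 (JF a)) + x3 y2) + QQ (embX x2 x3)"
proof -
  have "conv (dtilde (embX x2 x3)) (dtilde (embX y2 y3)) (\<lambda>u. snd u (fst u))
    = abf (\<lambda>x. abf (tau x (\<lambda>u. snd u (fst u))) (embX y2 y3)) (embX x2 x3)"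
    by (simp add: conv_def dtilde_def)
  also have "\<dots> = QQ (embX y2 y3)
     + embX x2 x3 (\<lambda>u. if u \<in> Xc then y2 (snd u) + y3 (JF (fst u)) else 0) + QQ (embX x2 x3)"
    unfolding QQ_def[of "embX x2 x3"]
  proof (rule abf_quad)
    show "embX x2 x3 (\<lambda>_. 0) = 0" using x2 x3 by (rule embX_zero)
  next
    fix u :: "'a X" and t assume u: "u \<in> Xc"
    then have us: "snd u \<in> Fd" by (simp add: Xc_iff)
    show "abf (tau (Xsm t u) (\<lambda>u. snd u (fst u))) (embX y2 y3)
      = QQ (embX y2 y3) + (y2 (snd u) + y3 (JF (fst u))) * t + snd u (fst u) * t ^ 2"
      using inner[OF y2 y3 Xsm_Xc[OF u]] us y2 y3
      by (simp add: JF_scale algebra_simps power2_eq_square)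
  next
    fix y :: "'a X" and e assume "y \<in> Xc"
    then show "y2 (snd (Xadd (Xsm e y) Xzero)) + y3 (JF (fst (Xadd (Xsm e y) Xzero))) =
       e * (y2 (snd y) + y3 (JF (fst y)))"
      using y2 y3 by (simp add: Xc_iff algebra_simps JF_scale)
  qed (rule q_expand)
  also have "(\<lambda>u. if u \<in> Xc then y2 (snd u) + y3 (JF (fst u)) else 0)
      = (\<lambda>u. if u \<in> Xc then (\<lambda>a. y3 (JF a)) (fst u) + y2 (snd u) else 0)"
    by (auto simp: fun_eq_iff)
  also have "embX x2 x3 \<dots> = x2 (\<lambda>a. y3 (JF a)) + x3 y2"
    using x2 x3 y2 y3 compJF_Fd[OF y3] by (intro embX_lin) auto
  finally show ?thesis by simp
qed


lemma quad_bound: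
  assumes "u \<in> Xc"
  shows "cmod (snd u (fst u)) \<le> XN u * XN u"
proof -
  have s: "snd u \<in> Fd" using assms by (simp add: Xc_iff)
  have "cmod (snd u (fst u)) \<le> FdN (snd u) * norm (fst u)" by (rule Fd_bound[OF s])
  also have "\<dots> \<le> XN u * XN u"
    by (rule mult_mono) (auto simp: XN_ge1 XN_ge2 XN_nonneg)
  finally show ?thesis .
qed

lemma f0_bdd: "\<exists>M. \<forall>x\<in>Xc. XN x \<le> r \<longrightarrow> cmod (snd x (fst x)) \<le> M"
proof (intro exI[of _ "r * r"] ballI impI)
  fix x :: "'a::cbanach X" assume x: "x \<in> Xc" and r: "XN x \<le> r"
  have "XN x * XN x \<le> r * r" using r XN_nonneg[of x] by (intro mult_mono) auto
  then show "cmod (snd x (fst x)) \<le> r * r" using quad_bound[OF x] by linarith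
qed

lemma f0_diff:
  fixes x :: "'a::cbanach X" assumes x: "x \<in> Xc"
  shows "\<exists>D\<in>Xd. \<forall>e>0. \<exists>d>0. \<forall>h\<in>Xc. XN h < d \<longrightarrow>
          cmod (snd (Xadd x h) (fst (Xadd x h)) - snd x (fst x) - D h) \<le> e * XN h"
proof -
  have xs: "snd x \<in> Fd" using x by (simp add: Xc_iff)
  define D where "D = (\<lambda>u::'a X. if u \<in> Xc then snd x (fst u) + JF (fst x) (snd u) else 0)"
  have D: "D \<in> Xd" unfolding D_def using xs by (intro Xd_lin) auto
  show ?thesis
  proof (intro bexI[OF _ D] allI impI)
    fix e :: real assume e: "e > 0"
    show "\<exists>d>0. \<forall>h\<in>Xc. XN h < d \<longrightarrow>
          cmod (snd (Xadd x h) (fst (Xadd x h)) - snd x (fst x) - D h) \<le> e * XN h"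
    proof (intro exI[of _ e] conjI ballI impI)
      fix h :: "'a X" assume h: "h \<in> Xc" and hd: "XN h < e"
      have hs: "snd h \<in> Fd" using h by (simp add: Xc_iff)
      have "snd (Xadd x h) (fst (Xadd x h)) - snd x (fst x) - D h = snd h (fst h)"
        using xs hs h by (simp add: D_def)
      moreover have "cmod (snd h (fst h)) \<le> XN h * XN h" by (rule quad_bound[OF h])
      moreover have "XN h * XN h \<le> e * XN h" using hd XN_nonneg[of h] by (intro mult_right_mono) auto
      ultimately show "cmod (snd (Xadd x h) (fst (Xadd x h)) - snd x (fst x) - D h) \<le> e * XN h" by simp
    qed (use e in auto)
  qed
qed

lemma f0_Hb: "(\<lambda>u::'a::cbanach X. snd u (fst u)) \<in> Hb"
  unfolding Hb_def using f0_diff f0_bdd by blast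

theorem lemma2p6:
  fixes x2 y2 :: "('a::cbanach \<Rightarrow> complex) \<Rightarrow> complex"
    and x3 y3 :: "(('a \<Rightarrow> complex) \<Rightarrow> complex) \<Rightarrow> complex"
  assumes "x2 \<in> Fdd" and "y2 \<in> Fdd" and "x3 \<in> Fddd" and "y3 \<in> Fddd"
    and "\<forall>f\<in>Hb. conv (dtilde (embX x2 x3)) (dtilde (embX y2 y3)) f
              = conv (dtilde (embX y2 y3)) (dtilde (embX x2 x3)) f"
  shows "rho x3 y2 = rho y3 x2"
proof -
  have "conv (dtilde (embX x2 x3)) (dtilde (embX y2 y3)) (\<lambda>u. snd u (fst u))
      = conv (dtilde (embX y2 y3)) (dtilde (embX x2 x3)) (\<lambda>u. snd u (fst u))"
    using assms(5) f0_Hb by blast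
  then have "x2 (\<lambda>a. y3 (JF a)) + x3 y2 = y2 (\<lambda>a. x3 (JF a)) + y3 x2"
    using conv_formula[OF assms(1,3,2,4)] conv_formula[OF assms(2,4,1,3)] by simp
  then show ?thesis using assms(1-4) by (simp add: rho_eq algebra_simps)
qed

end
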